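(* Let $P(T)=a_0T^N+a_1T^{N-1}+\cdots+a_N\in\mathbb{L}_p[T]$ with $a_0\neq 0$, $a_N\neq0$, let $s=s^P_{\max}$ and $m=m^P_{\max}$, let $u\in\mathcal{O}_{\mathbb{L}_p}^*$, and write $P_u(T)=P(T+up^{s})=\sum_{i=0}^Nb_{N-i}T^i$. Then: (1) on the range $0\leq x\leq m$, the Newton polygons $\mathrm{NP}(P_u)$ and $\mathrm{NP}(P)$ coincide; (2) for $m<k\leq N$, the point $(k,v_p(b_k))$ lies on or above $\mathrm{NP}(P)$, i.e. $v_p(b_k)\geq v_p(a_m)+s(k-m)$.
   Context: $\mathbb{L}_p$ is the $p$-adic Mal'cev–Neumann field of formal sums $\sum_{x\in\mathbb{Q}}[\alpha_x]p^x$ ($\alpha_x\in\bar{\mathbb{F}}_p$, $[\cdot]$ Teichmüller lift, well-ordered support), with valuation $v_p$ = minimum of support, valuation ring $\mathcal{O}_{\mathbb{L}_p}$ and units $\mathcal{O}_{\mathbb{L}_p}^*$. $\mathrm{NP}(P)$ is the lower boundary of the convex hull of the points $(k,v_p(a_k))$ with $a_k\neq0$; its vertices are the breakpoints; $m^P_{\max}$ is the largest breakpoint $<N$ and $s^P_{\max}=\frac{v_p(a_N)-v_p(a_{m^P_{\max}})}{N-m^P_{\max}}$ is the maximal slope. *)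

theory Defs
  imports "HOL-Analysis.Analysis" "HOL-Computational_Algebra.Computational_Algebra"
begin

text \<open>Abstract model of the p-adic Mal'cev-Neumann field: a field with a
  rational-valued valuation v (meaningful on nonzero elements; v 0 plays the
  role of +infinity and is never used) and a family of powers p^r, r rational.\<close>
definition padic_valued_field :: "nat \<Rightarrow> ('a::field \<Rightarrow> rat) \<Rightarrow> (rat \<Rightarrow> 'a) \<Rightarrow> bool" where
  "padic_valued_field p v pw \<longleftrightarrow>
     prime p \<and>
     (\<forall>x y. x \<noteq> 0 \<longrightarrow> y \<noteq> 0 \<longrightarrow> v (x * y) = v x + v y) \<and>
     (\<forall>x y. x \<noteq> 0 \<longrightarrow> y \<noteq> 0 \<longrightarrow> x + y \<noteq> 0 \<longrightarrow> min (v x) (v y) \<le> v (x + y)) \<and>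
     (\<forall>r. pw r \<noteq> 0 \<and> v (pw r) = r) \<and>
     (\<forall>r q. pw (r + q) = pw r * pw q) \<and>
     pw 1 = of_nat p"

definition val_unit :: "('a::field \<Rightarrow> rat) \<Rightarrow> 'a \<Rightarrow> bool" where
  "val_unit v u \<longleftrightarrow> u \<noteq> 0 \<and> v u = 0"

text \<open>Paper's indexing: P(T) = a_0 T^N + a_1 T^(N-1) + ... + a_N, so a_k = coeff P (N - k).\<close>
definition nc :: "'a::zero poly \<Rightarrow> nat \<Rightarrow> 'a" where
  "nc P k = coeff P (degree P - k)"

definition np_points :: "('a::field \<Rightarrow> rat) \<Rightarrow> 'a poly \<Rightarrow> (real \<times> real) set" where
  "np_points v P = {(real k, real_of_rat (v (nc P k))) | k. k \<le> degree P \<and> nc P k \<noteq> 0}"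

definition newton_polygon :: "('a::field \<Rightarrow> rat) \<Rightarrow> 'a poly \<Rightarrow> real \<Rightarrow> real" where
  "newton_polygon v P x = Inf {y. (x, y) \<in> convex hull (np_points v P)}"

definition np_breakpoint :: "('a::field \<Rightarrow> rat) \<Rightarrow> 'a poly \<Rightarrow> nat \<Rightarrow> bool" where
  "np_breakpoint v P k \<longleftrightarrow> k \<le> degree P \<and> nc P k \<noteq> 0 \<and>
     (real k, real_of_rat (v (nc P k))) extreme_point_of
       {(x, y + t) | x y t. (x, y) \<in> convex hull (np_points v P) \<and> t \<ge> 0}"

definition m_max :: "('a::field \<Rightarrow> rat) \<Rightarrow> 'a poly \<Rightarrow> nat" where
  "m_max v P = Max {k. np_breakpoint v P k \<and> k < degree P}"

definition s_max :: "('a::field \<Rightarrow> rat) \<Rightarrow> 'a poly \<Rightarrow> rat" where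
  "s_max v P = (v (nc P (degree P)) - v (nc P (m_max v P))) / of_nat (degree P - m_max v P)"

end

theory Submission
  imports Defs
begin

lemma pvf_mult: assumes "padic_valued_field p v pw" "x \<noteq> 0" "y \<noteq> 0" shows "v (x * y) = v x + v y"
proof -
  have "\<forall>x y. x \<noteq> 0 \<longrightarrow> y \<noteq> 0 \<longrightarrow> v (x * y) = v x + v y"
    using assms(1) unfolding padic_valued_field_def by (rule conjunct1[OF conjunct2])
  then show ?thesis using assms by blast
qed

lemma pvf_one: assumes "padic_valued_field p v pw" shows "v 1 = 0"
  using pvf_mult[OF assms, of 1 1] by simp

lemma pvf_add: assumes "padic_valued_field p v pw" "x \<noteq> 0" "y \<noteq> 0" "x + y \<noteq> 0"
  shows "min (v x) (v y) \<le> v (x + y)"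
proof -
  have "\<forall>x y. x \<noteq> 0 \<longrightarrow> y \<noteq> 0 \<longrightarrow> x + y \<noteq> 0 \<longrightarrow> min (v x) (v y) \<le> v (x + y)"
    using assms(1) unfolding padic_valued_field_def by (rule conjunct1[OF conjunct2[OF conjunct2]])
  then show ?thesis using assms by blast
qed

lemma pvf_pw: assumes "padic_valued_field p v pw" shows "pw r \<noteq> 0 \<and> v (pw r) = r"
proof -
  have "\<forall>r. pw r \<noteq> 0 \<and> v (pw r) = r"
    using assms(1) unfolding padic_valued_field_def by (rule conjunct1[OF conjunct2[OF conjunct2[OF conjunct2]]])
  then show ?thesis by blast
qed

lemma pvf_uminus: assumes L: "padic_valued_field p v pw" and "x \<noteq> 0" shows "v (- x) = v x"
proof -
  have "v 1 = v (-1) + v (-1)" using pvf_mult[OF L, of "-1" "-1"] by simp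
  then have "v (-1) = 0" using pvf_one[OF L] by simp
  then show ?thesis using pvf_mult[OF L, of "-1" x] assms by simp
qed

lemma pvf_power: assumes L: "padic_valued_field p v pw" and x: "x \<noteq> 0" shows "v (x ^ n) = of_nat n * v x"
proof (induction n)
  case 0 then show ?case using pvf_one[OF L] by simp
next
  case (Suc n)
  have "v (x ^ Suc n) = v x + v (x ^ n)" using pvf_mult[OF L x, of "x ^ n"] x by simp
  then show ?case using Suc.IH by (simp add: algebra_simps)
qed

lemma pvf_nat: assumes L: "padic_valued_field p v pw" shows "of_nat n \<noteq> (0::'a::field) \<Longrightarrow> v (of_nat n :: 'a) \<ge> 0"
proof (induction n)
  case 0 then show ?case by simp
next
  case (Suc n)
  show ?case
  proof (cases "of_nat n = (0::'a)")
    case True then show ?thesis using pvf_one[OF L] by simp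
  next
    case False
    have ne: "(1::'a) + of_nat n \<noteq> 0" using Suc.prems by (simp add: add.commute)
    have "min (v (1::'a)) (v (of_nat n)) \<le> v (1 + of_nat n)"
      using pvf_add[OF L _ False ne] by simp
    then show ?thesis using Suc.IH[OF False] pvf_one[OF L] by (simp add: add.commute)
  qed
qed

lemma pvf_sum_exists:
  assumes L: "padic_valued_field p v pw"
  shows "finite I \<Longrightarrow> sum f I \<noteq> 0 \<Longrightarrow> \<exists>i\<in>I. f i \<noteq> 0 \<and> v (f i) \<le> v (sum f I)"
proof (induction I rule: finite_induct)
  case empty then show ?case by simp
next
  case (insert a I)
  have s: "sum f (insert a I) = f a + sum f I" using insert by simp
  show ?case
  proof (cases "f a = 0")
    case True
    then have "sum f I \<noteq> 0" using insert.prems s by simp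
    then obtain i where "i \<in> I" "f i \<noteq> 0" "v (f i) \<le> v (sum f I)" using insert.IH by blast
    then show ?thesis using s True by auto
  next
    case fa: False
    show ?thesis
    proof (cases "sum f I = 0")
      case True then show ?thesis using s fa by auto
    next
      case False
      have "min (v (f a)) (v (sum f I)) \<le> v (sum f (insert a I))"
        using pvf_add[OF L fa False] insert.prems s by simp
      then show ?thesis
      proof (cases "v (f a) \<le> v (sum f (insert a I))")
        case True then show ?thesis using fa by auto
      next
        case False
        with \<open>min _ _ \<le> _\<close> have le: "v (sum f I) \<le> v (sum f (insert a I))" by linarith
        obtain i where "i \<in> I" "f i \<noteq> 0" "v (f i) \<le> v (sum f I)"
          using insert.IH \<open>sum f I \<noteq> 0\<close> by blast
        then show ?thesis using le by force
      qed
    qed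
  qed
qed

lemma pvf_dominant:
  assumes L: "padic_valued_field p v pw" and fin: "finite I" and aI: "a \<in> I" and fa: "f a \<noteq> 0"
    and dom: "\<And>i. i \<in> I \<Longrightarrow> i \<noteq> a \<Longrightarrow> f i \<noteq> 0 \<Longrightarrow> v (f i) > v (f a)"
  shows "sum f I \<noteq> 0 \<and> v (sum f I) = v (f a)"
proof -
  define r where "r = sum f (I - {a})"
  have s: "sum f I = f a + r" unfolding r_def using fin aI by (simp add: sum.remove)
  show ?thesis
  proof (cases "r = 0")
    case True then show ?thesis using s fa by simp
  next
    case False
    obtain i where i: "i \<in> I - {a}" "f i \<noteq> 0" "v (f i) \<le> v r"
      using pvf_sum_exists[OF L, of "I - {a}" f] False fin unfolding r_def by auto
    have vr: "v r > v (f a)" using dom[of i] i by force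
    have ne: "f a + r \<noteq> 0"
    proof
      assume "f a + r = 0"
      then have "r = - f a" by (simp add: eq_neg_iff_add_eq_0 add.commute)
      then have "v r = v (f a)" using pvf_uminus[OF L fa] by simp
      with vr show False by simp
    qed
    have m1: "min (v (f a)) (v r) \<le> v (f a + r)" using pvf_add[OF L fa False ne] .
    have nr: "- r \<noteq> 0" using False by simp
    have m2: "min (v (f a + r)) (v (- r)) \<le> v (f a + r + - r)"
      using pvf_add[OF L ne nr] fa by simp
    have "v (- r) = v r" using pvf_uminus[OF L False] .
    with m1 m2 vr have "v (f a + r) = v (f a)" by (simp add: min_def split: if_splits)
    then show ?thesis using s ne by simp
  qed
qed

lemma coeff_shift:
  fixes Q :: "'a::field poly"
  shows "coeff (pcompose Q [:c, 1:]) i = (\<Sum>n\<le>degree Q. coeff Q n * (of_nat (n choose i) * c ^ (n - i)))"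
proof -
  have "pcompose Q [:c, 1:] = (\<Sum>n\<le>degree Q. [:coeff Q n:] * [:c, 1:] ^ n)"
    unfolding pcompose_altdef poly_altdef
    by (simp add: degree_map_poly coeff_map_poly)
  then have "coeff (pcompose Q [:c, 1:]) i = (\<Sum>n\<le>degree Q. coeff Q n * coeff ([:c, 1:] ^ n) i)"
    by (simp add: coeff_sum)
  also have "\<dots> = (\<Sum>n\<le>degree Q. coeff Q n * (of_nat (n choose i) * c ^ (n - i)))"
  proof (rule sum.cong[OF refl])
    fix n
    show "coeff Q n * coeff ([:c, 1:] ^ n) i = coeff Q n * (of_nat (n choose i) * c ^ (n - i))"
    proof (cases "i \<le> n")
      case True then show ?thesis by (simp add: coeff_linear_poly_power)
    next
      case False
      have "degree ([:c, 1:] ^ n) \<le> n"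
        using degree_power_le[of "[:c, 1:]" n] by simp
      then show ?thesis using False by (simp add: coeff_eq_0 binomial_eq_0)
    qed
  qed
  finally show ?thesis .
qed

lemma shift_est:
  fixes Q :: "'a::field poly"
  assumes L: "padic_valued_field p v pw" and c: "c \<noteq> 0"
    and nz: "coeff (pcompose Q [:c, 1:]) i \<noteq> 0"
  shows "\<exists>n. i \<le> n \<and> n \<le> degree Q \<and> coeff Q n \<noteq> 0 \<and>
           v (coeff Q n) + of_nat (n - i) * v c \<le> v (coeff (pcompose Q [:c, 1:]) i)"
proof -
  let ?f = "\<lambda>n. coeff Q n * (of_nat (n choose i) * c ^ (n - i))"
  obtain n where n: "n \<in> {..degree Q}" "?f n \<noteq> 0" "v (?f n) \<le> v (sum ?f {..degree Q})"
    using pvf_sum_exists[OF L, of "{..degree Q}" ?f] nz unfolding coeff_shift by auto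
  have a: "coeff Q n \<noteq> 0" and b: "(of_nat (n choose i) :: 'a) \<noteq> 0" using n(2) by auto
  have "i \<le> n" using b by (metis binomial_eq_0 not_le of_nat_0)
  have "v (?f n) = v (coeff Q n) + (v (of_nat (n choose i) :: 'a) + of_nat (n - i) * v c)"
    using pvf_mult[OF L] pvf_power[OF L c] a b c by simp
  moreover have "v (of_nat (n choose i) :: 'a) \<ge> 0" using pvf_nat[OF L b] .
  ultimately show ?thesis using n a \<open>i \<le> n\<close> unfolding coeff_shift[symmetric] by (intro exI[of _ n]) auto
qed

definition upc :: "(real \<times> real) set \<Rightarrow> (real \<times> real) set" where
  "upc T = {(x, y + t) | x y t. (x, y) \<in> convex hull T \<and> t \<ge> 0}"

definition fib :: "(real \<times> real) set \<Rightarrow> real \<Rightarrow> real set" where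
  "fib T x = {y. (x, y) \<in> convex hull T}"

lemma conv_lin_ge:
  fixes T :: "(real \<times> real) set"
  assumes "\<forall>z\<in>T. c \<le> \<alpha> * fst z + \<beta> * snd z" "z \<in> convex hull T"
  shows "c \<le> \<alpha> * fst z + \<beta> * snd z"
proof -
  have "convex {z::real\<times>real. c \<le> \<alpha> * fst z + \<beta> * snd z}"
  proof (rule convexI)
    fix x y :: "real \<times> real" and u w :: real
    assume x: "x \<in> {z. c \<le> \<alpha> * fst z + \<beta> * snd z}" and y: "y \<in> {z. c \<le> \<alpha> * fst z + \<beta> * snd z}"
      and u: "0 \<le> u" "0 \<le> w" "u + w = 1"
    have "u * c \<le> u * (\<alpha> * fst x + \<beta> * snd x)" using x u by (intro mult_left_mono) auto
    moreover have "w * c \<le> w * (\<alpha> * fst y + \<beta> * snd y)" using y u by (intro mult_left_mono) auto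
    moreover have "u * c + w * c = c"
    proof -
      have "u * c + w * c = (u + w) * c" by (simp add: distrib_right)
      then show ?thesis using u(3) by simp
    qed
    ultimately have "c \<le> u * (\<alpha> * fst x + \<beta> * snd x) + w * (\<alpha> * fst y + \<beta> * snd y)"
      by linarith
    then show "u *\<^sub>R x + w *\<^sub>R y \<in> {z. c \<le> \<alpha> * fst z + \<beta> * snd z}"
      by (simp add: algebra_simps)
  qed
  then have "convex hull T \<subseteq> {z. c \<le> \<alpha> * fst z + \<beta> * snd z}"
    using assms(1) by (intro hull_minimal) auto
  then show ?thesis using assms(2) by auto
qed

lemma upc_convex: "convex (upc T)"
proof (rule convexI)
  fix a b :: "real \<times> real" and u w :: real
  assume a: "a \<in> upc T" and b: "b \<in> upc T" and u: "0 \<le> u" "0 \<le> w" "u + w = 1"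
  obtain x1 y1 t1 where 1: "a = (x1, y1 + t1)" "(x1, y1) \<in> convex hull T" "t1 \<ge> 0"
    using a unfolding upc_def by auto
  obtain x2 y2 t2 where 2: "b = (x2, y2 + t2)" "(x2, y2) \<in> convex hull T" "t2 \<ge> 0"
    using b unfolding upc_def by auto
  have "u *\<^sub>R (x1, y1) + w *\<^sub>R (x2, y2) \<in> convex hull T"
    using 1 2 u by (intro convexD[OF convex_convex_hull]) auto
  then have "(u * x1 + w * x2, u * y1 + w * y2) \<in> convex hull T" by simp
  moreover have "u * t1 + w * t2 \<ge> 0" using 1 2 u by simp
  moreover have "u *\<^sub>R a + w *\<^sub>R b = (u * x1 + w * x2, (u * y1 + w * y2) + (u * t1 + w * t2))"
    using 1 2 by (simp add: algebra_simps)
  ultimately show "u *\<^sub>R a + w *\<^sub>R b \<in> upc T" unfolding upc_def by blast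
qed

lemma hull_sub_upc: "convex hull T \<subseteq> upc T"
proof
  fix z assume "z \<in> convex hull T"
  then show "z \<in> upc T" unfolding upc_def by (cases z) force
qed

lemma sub_upc: "T \<subseteq> upc T"
  by (rule order_trans[OF hull_subset[of T convex] hull_sub_upc])

lemma upc_up: "(x, y) \<in> upc T \<Longrightarrow> y \<le> y' \<Longrightarrow> (x, y') \<in> upc T"
  unfolding upc_def
proof clarify
  fix y0 t assume "(x, y0) \<in> convex hull T" "0 \<le> t" "y0 + t \<le> y'"
  then show "\<exists>xa y t. (x, y') = (xa, y + t) \<and> (xa, y) \<in> convex hull T \<and> 0 \<le> t"
    by (intro exI[of _ x] exI[of _ y0] exI[of _ "y' - y0"]) auto
qed

lemma hull_sub_upc2: "S2 \<subseteq> upc S1 \<Longrightarrow> convex hull S2 \<subseteq> upc S1"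
  by (intro hull_minimal upc_convex)

lemma fib_bdd:
  assumes "finite T" shows "bdd_below (fib T x)"
proof -
  obtain c where c: "\<forall>z\<in>T. c \<le> snd z"
  proof (cases "T = {}")
    case True then show ?thesis using that by auto
  next
    case False
    show ?thesis using that[of "Min (snd ` T)"] assms False by auto
  qed
  have "\<forall>y\<in>fib T x. c \<le> y"
    using conv_lin_ge[of T c 0 1] c unfolding fib_def by fastforce
  then show ?thesis by (auto simp: bdd_below_def)
qed

lemma np_mono:
  assumes fin: "finite S1" and ne: "fib S2 x \<noteq> {}"
    and sub: "\<And>y. y \<in> fib S2 x \<Longrightarrow> (x, y) \<in> upc S1"
  shows "Inf (fib S1 x) \<le> Inf (fib S2 x)"
proof (rule cInf_greatest[OF ne])
  fix y assume y: "y \<in> fib S2 x"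
  obtain y0 t where "(x, y0) \<in> convex hull S1" "t \<ge> 0" "y = y0 + t"
    using sub[OF y] unfolding upc_def by auto
  then have "y0 \<in> fib S1 x" "y0 \<le> y" unfolding fib_def by auto
  then show "Inf (fib S1 x) \<le> y" using cInf_lower[OF _ fib_bdd[OF fin]] by force
qed

lemma seg_upc:
  fixes j k n :: real
  assumes P1: "(j, wa) \<in> T" and P2: "(n, wb) \<in> T" and jk: "j \<le> k" and kn: "k \<le> n"
    and sl: "wb - wa \<le> s * (n - j)" and w: "w \<ge> wa + (k - j) * s"
  shows "(k, w) \<in> upc T"
proof (cases "j = n")
  case True
  then have "k = j" using jk kn by simp
  then have "w \<ge> wa" using w by simp
  then show ?thesis using upc_up[of k wa T w] P1 sub_upc \<open>k = j\<close> by auto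
next
  case False
  then have jn: "j < n" using jk kn by simp
  define l where "l = (k - j) / (n - j)"
  have l: "0 \<le> l" "l \<le> 1" using jk kn jn unfolding l_def by auto
  have "(1 - l) *\<^sub>R (j, wa) + l *\<^sub>R (n, wb) \<in> convex hull T"
    using P1 P2 l by (intro convexD_alt[OF convex_convex_hull] hull_inc) auto
  moreover have "(1 - l) *\<^sub>R (j, wa) + l *\<^sub>R (n, wb) = (k, wa + l * (wb - wa))"
  proof -
    have e1: "l * (n - j) = k - j" using jn by (simp add: l_def)
    have "(1 - l) * j + l * n = j + l * (n - j)" by (simp add: algebra_simps)
    then have "(1 - l) * j + l * n = k" using e1 by simp
    moreover have "(1 - l) * wa + l * wb = wa + l * (wb - wa)" by (simp add: algebra_simps)
    ultimately show ?thesis by simp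
  qed
  ultimately have "(k, wa + l * (wb - wa)) \<in> upc T" using hull_sub_upc by auto
  moreover have "l * (wb - wa) \<le> (k - j) * s"
  proof -
    have "l * (wb - wa) \<le> l * (s * (n - j))" using l sl by (intro mult_left_mono) auto
    also have "\<dots> = (k - j) * s" using jn unfolding l_def by simp
    finally show ?thesis .
  qed
  ultimately show ?thesis using upc_up w by fastforce
qed

lemma not_extreme:
  fixes j m n :: real
  assumes Pj: "(j, yj) \<in> T" and Pn: "(n, yn) \<in> T" and jm: "j < m" and mn: "m < n"
    and h: "(1 - (m - j) / (n - j)) * yj + ((m - j) / (n - j)) * yn \<le> ym"
  shows "\<not> ((m, ym) extreme_point_of upc T)"
proof
  assume ext: "(m, ym) extreme_point_of upc T"
  define l where "l = (m - j) / (n - j)"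
  have l: "0 < l" "l < 1" using jm mn unfolding l_def by auto
  define h where "h = (1 - l) * yj + l * yn"
  have Z: "(1 - l) *\<^sub>R (j, yj) + l *\<^sub>R (n, yn) \<in> convex hull T"
    using Pj Pn l by (intro convexD_alt[OF convex_convex_hull] hull_inc) auto
  have Zeq: "(1 - l) *\<^sub>R (j, yj) + l *\<^sub>R (n, yn) = (m, h)"
  proof -
    have e1: "l * (n - j) = m - j" using jm mn by (simp add: l_def)
    have "(1 - l) * j + l * n = j + l * (n - j)" by (simp add: algebra_simps)
    then have "(1 - l) * j + l * n = m" using e1 by simp
    then show ?thesis unfolding h_def by simp
  qed
  have hm: "h \<le> ym" using h unfolding h_def l_def .
  show False
  proof (cases "h = ym")
    case True
    have "(m, ym) \<in> open_segment (j, yj) (n, yn)"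
      unfolding in_segment using l Zeq True jm mn by auto
    then show False using ext Pj Pn sub_upc unfolding extreme_point_of_def by blast
  next
    case False
    then have hlt: "h < ym" using hm by simp
    have a: "(m, h) \<in> upc T" using Z Zeq hull_sub_upc by auto
    have b: "(m, 2 * ym - h) \<in> upc T" using upc_up[OF a] hlt by simp
    have "(m, ym) \<in> open_segment (m, h) (m, 2 * ym - h)"
      unfolding in_segment using hlt
      by (intro conjI exI[of _ "1/2"]) (auto simp: field_simps)
    then show False using ext a b unfolding extreme_point_of_def by blast
  qed
qed

lemma wz:
  fixes u w X Y :: real
  assumes "0 \<le> u" "0 \<le> w" "X \<ge> 0" "Y \<ge> 0" "u * X + w * Y = 0"
  shows "u * X = 0 \<and> w * Y = 0"
proof -
  have "u * X \<ge> 0" "w * Y \<ge> 0" using assms by auto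
  then show ?thesis using assms(5) by linarith
qed

lemma lex_extreme:
  fixes T :: "(real \<times> real) set" and q :: "real \<times> real"
  assumes qT: "q \<in> T"
    and H: "\<forall>z\<in>T. \<alpha> * fst q + \<beta> * snd q < \<alpha> * fst z + \<beta> * snd z \<or>
              (\<alpha> * fst z + \<beta> * snd z = \<alpha> * fst q + \<beta> * snd q \<and> \<gamma> * fst q + \<delta> * snd q \<le> \<gamma> * fst z + \<delta> * snd z)"
    and vert: "\<beta> > 0 \<or> (\<beta> = 0 \<and> \<delta> \<ge> 0)"
    and det: "\<alpha> * \<delta> - \<beta> * \<gamma> \<noteq> 0"
  shows "q extreme_point_of upc T"
proof -
  define f1 where "f1 z = \<alpha> * fst z + \<beta> * snd z" for z :: "real \<times> real"
  define f2 where "f2 z = \<gamma> * fst z + \<delta> * snd z" for z :: "real \<times> real"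
  define V where "V = {z. f1 q < f1 z \<or> (f1 z = f1 q \<and> f2 q \<le> f2 z)}"
  have l1: "f1 (u *\<^sub>R a + w *\<^sub>R b) = u * f1 a + w * f1 b" for u w a b
    unfolding f1_def by (simp add: algebra_simps)
  have l2: "f2 (u *\<^sub>R a + w *\<^sub>R b) = u * f2 a + w * f2 b" for u w a b
    unfolding f2_def by (simp add: algebra_simps)
  have cV: "convex V"
  proof (rule convexI)
    fix a b :: "real \<times> real" and u w :: real
    assume a: "a \<in> V" and b: "b \<in> V" and u: "0 \<le> u" "0 \<le> w" "u + w = 1"
    let ?z = "u *\<^sub>R a + w *\<^sub>R b"
    have fa: "f1 a \<ge> f1 q" "f1 b \<ge> f1 q" using a b unfolding V_def by auto
    have e1: "f1 ?z - f1 q = u * (f1 a - f1 q) + w * (f1 b - f1 q)"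
      using u(3) l1 by (simp add: algebra_simps) (metis add_diff_cancel_left' diff_add_cancel distrib_right mult_1)
    have e2: "f2 ?z - f2 q = u * (f2 a - f2 q) + w * (f2 b - f2 q)"
      using u(3) l2 by (simp add: algebra_simps) (metis add_diff_cancel_left' diff_add_cancel distrib_right mult_1)
    have g1: "u * (f1 a - f1 q) \<ge> 0" "w * (f1 b - f1 q) \<ge> 0" using fa u by auto
    show "?z \<in> V"
    proof (cases "f1 ?z > f1 q")
      case True then show ?thesis unfolding V_def by simp
    next
      case False
      then have "f1 ?z = f1 q" using e1 g1 by linarith
      then have z0: "u * (f1 a - f1 q) = 0" "w * (f1 b - f1 q) = 0" using e1 g1 by linarith+
      have "u * (f2 a - f2 q) \<ge> 0"
      proof (cases "u = 0")
        case False
        then have "f1 a = f1 q" using z0 by simp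
        then have "f2 a \<ge> f2 q" using a unfolding V_def by auto
        then show ?thesis using u by simp
      qed simp
      moreover have "w * (f2 b - f2 q) \<ge> 0"
      proof (cases "w = 0")
        case False
        then have "f1 b = f1 q" using z0 by simp
        then have "f2 b \<ge> f2 q" using b unfolding V_def by auto
        then show ?thesis using u by simp
      qed simp
      ultimately show ?thesis using e2 \<open>f1 ?z = f1 q\<close> unfolding V_def by simp
    qed
  qed
  have "convex hull T \<subseteq> V"
    using H cV unfolding V_def f1_def f2_def by (intro hull_minimal) auto
  have uV: "upc T \<subseteq> V"
  proof
    fix z assume "z \<in> upc T"
    then obtain x y t where z: "z = (x, y + t)" "(x, y) \<in> convex hull T" "t \<ge> 0"
      unfolding upc_def by auto
    have xy: "(x, y) \<in> V" using z(2) \<open>convex hull T \<subseteq> V\<close> by auto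
    have f1z: "f1 z = f1 (x, y) + \<beta> * t" "f2 z = f2 (x, y) + \<delta> * t"
      unfolding z(1) f1_def f2_def by (simp_all add: algebra_simps)
    show "z \<in> V"
    proof (cases "t = 0")
      case True then show ?thesis using xy z by simp
    next
      case False
      then have tp: "t > 0" using z by simp
      show ?thesis
      proof (cases "\<beta> > 0")
        case True
        then have "\<beta> * t > 0" using tp by simp
        then show ?thesis using xy f1z unfolding V_def by auto
      next
        case False
        then have "\<beta> = 0" "\<delta> \<ge> 0" using vert by auto
        then have "\<delta> * t \<ge> 0" using tp by simp
        then show ?thesis using xy f1z \<open>\<beta> = 0\<close> unfolding V_def by auto
      qed
    qed
  qed
  have inj: "a = q" if "f1 a = f1 q" "f2 a = f2 q" for a
  proof -
    define dx where "dx = fst a - fst q"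
    define dy where "dy = snd a - snd q"
    have h1: "\<alpha> * dx + \<beta> * dy = 0" using that(1) unfolding f1_def dx_def dy_def by (simp add: algebra_simps)
    have h2: "\<gamma> * dx + \<delta> * dy = 0" using that(2) unfolding f2_def dx_def dy_def by (simp add: algebra_simps)
    have "(\<alpha> * \<delta> - \<beta> * \<gamma>) * dx = \<delta> * (\<alpha> * dx + \<beta> * dy) - \<beta> * (\<gamma> * dx + \<delta> * dy)"
      by (simp add: algebra_simps)
    then have "dx = 0" using h1 h2 det by simp
    have "(\<alpha> * \<delta> - \<beta> * \<gamma>) * dy = \<alpha> * (\<gamma> * dx + \<delta> * dy) - \<gamma> * (\<alpha> * dx + \<beta> * dy)"
      by (simp add: algebra_simps)
    then have "dy = 0" using h1 h2 det by simp
    show "a = q" using \<open>dx = 0\<close> \<open>dy = 0\<close> unfolding dx_def dy_def by (simp add: prod_eq_iff)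
  qed
  show ?thesis unfolding extreme_point_of_def
  proof (intro conjI ballI)
    show "q \<in> upc T" using qT sub_upc by auto
  next
    fix a b assume a: "a \<in> upc T" and b: "b \<in> upc T"
    show "q \<notin> open_segment a b"
    proof
      assume "q \<in> open_segment a b"
      then obtain u where u: "a \<noteq> b" "0 < u" "u < 1" "q = (1 - u) *\<^sub>R a + u *\<^sub>R b"
        unfolding in_segment by auto
      have aV: "a \<in> V" and bV: "b \<in> V" using a b uV by auto
      have fa: "f1 a \<ge> f1 q" "f1 b \<ge> f1 q" using aV bV unfolding V_def by auto
      have "f1 q = (1 - u) * f1 a + u * f1 b" using u(4) l1 by simp
      then have "(1 - u) * (f1 a - f1 q) + u * (f1 b - f1 q) = 0" by (simp add: algebra_simps)
      then have "(1 - u) * (f1 a - f1 q) = 0 \<and> u * (f1 b - f1 q) = 0"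
        using wz[of "1 - u" u "f1 a - f1 q" "f1 b - f1 q"] u fa by auto
      then have e1: "f1 a = f1 q" "f1 b = f1 q" using u by auto
      then have fb: "f2 a \<ge> f2 q" "f2 b \<ge> f2 q" using aV bV unfolding V_def by auto
      have "f2 q = (1 - u) * f2 a + u * f2 b" using u(4) l2 by simp
      then have "(1 - u) * (f2 a - f2 q) + u * (f2 b - f2 q) = 0" by (simp add: algebra_simps)
      then have "(1 - u) * (f2 a - f2 q) = 0 \<and> u * (f2 b - f2 q) = 0"
        using wz[of "1 - u" u "f2 a - f2 q" "f2 b - f2 q"] u fb by auto
      then have e2: "f2 a = f2 q" "f2 b = f2 q" using u by auto
      have "a = q" "b = q" using inj e1 e2 by auto
      then show False using u(1) by simp
    qed
  qed
qed

lemma fib_ne: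
  assumes "(0, a) \<in> T" "(M, b) \<in> T" "0 \<le> x" "x \<le> M"
  shows "fib T x \<noteq> {}"
proof (cases "M = 0")
  case True
  then have "x = 0" using assms by simp
  then have "a \<in> fib T x" using assms(1) hull_subset[of T convex] unfolding fib_def by auto
  then show ?thesis by auto
next
  case False
  then have M: "M > 0" using assms by simp
  define l where "l = x / M"
  have l: "0 \<le> l" "l \<le> 1" using assms M unfolding l_def by auto
  have "(1 - l) *\<^sub>R (0, a) + l *\<^sub>R (M, b) \<in> convex hull T"
    using assms l by (intro convexD_alt[OF convex_convex_hull] hull_inc) auto
  moreover have "(1 - l) *\<^sub>R (0::real, a) + l *\<^sub>R (M, b) = (x, (1 - l) * a + l * b)"
    using M unfolding l_def by simp
  ultimately have "(1 - l) * a + l * b \<in> fib T x" unfolding fib_def by simp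
  then show ?thesis by auto
qed

lemma fiber_left:
  fixes A B :: "(real \<times> real) set" and M yq \<sigma> :: real
  assumes qA: "(M, yq) \<in> A" and Ale: "\<forall>z\<in>A. fst z \<le> M" and Bge: "\<forall>z\<in>B. fst z \<ge> M"
    and LA: "\<forall>z\<in>A \<union> B. yq - \<sigma> * M \<le> - \<sigma> * fst z + 1 * snd z"
    and zin: "z \<in> convex hull (A \<union> B)" and zM: "fst z \<le> M"
  shows "z \<in> upc A"
proof (cases "B = {}")
  case True then show ?thesis using zin hull_sub_upc by auto
next
  case Bne: False
  have Ane: "A \<noteq> {}" using qA by auto
  have "convex hull (A \<union> B) \<subseteq> convex hull (convex hull A \<union> convex hull B)"
    by (intro hull_mono) (use hull_subset[of A convex] hull_subset[of B convex] in auto)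
  also have "\<dots> = {u *\<^sub>R s + v *\<^sub>R t | u v s t. u \<ge> 0 \<and> v \<ge> 0 \<and> u + v = 1 \<and> s \<in> convex hull A \<and> t \<in> convex hull B}"
    using Ane Bne by (intro convex_hull_union_two) auto
  finally obtain u v a b where uv: "u \<ge> 0" "v \<ge> 0" "u + v = 1" and a: "a \<in> convex hull A"
    and b: "b \<in> convex hull B" and z: "z = u *\<^sub>R a + v *\<^sub>R b" using zin by blast
  have xa: "- M \<le> (-1) * fst a + 0 * snd a" using conv_lin_ge[of A "- M" "-1" 0 a] Ale a by auto
  have xb: "M \<le> 1 * fst b + 0 * snd b" using conv_lin_ge[of B M 1 0 b] Bge b by auto
  have ya: "yq - \<sigma> * M \<le> - \<sigma> * fst a + 1 * snd a" using conv_lin_ge[of A _ "- \<sigma>" 1 a] LA a by auto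
  have yb: "yq - \<sigma> * M \<le> - \<sigma> * fst b + 1 * snd b" using conv_lin_ge[of B _ "- \<sigma>" 1 b] LA b by auto
  have aU: "a \<in> upc A" using a hull_sub_upc by auto
  show ?thesis
  proof (cases "fst b = M")
    case True
    have "snd b \<ge> yq" using yb True by simp
    then have "(M, snd b) \<in> upc A" using upc_up[of M yq A "snd b"] qA sub_upc by auto
    then have "b \<in> upc A" using True by (metis prod.collapse)
    then show ?thesis using aU z uv convexD[OF upc_convex] by blast
  next
    case False
    then have xb': "fst b > M" using xb by simp
    show ?thesis
    proof (cases "fst a = M")
      case True
      have "fst z = u * fst a + v * fst b" using z by simp
      moreover have "u = 1 - v" using uv by simp
      ultimately have "fst z = (1 - v) * M + v * fst b" using True by simp
      then have "fst z = M + v * (fst b - M)" by (simp add: algebra_simps)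
      then have "v * (fst b - M) \<le> 0" using zM by linarith
      then have "v = 0" using xb' uv by (simp add: mult_le_0_iff)
      then have "z = a" using z uv by simp
      then show ?thesis using aU by simp
    next
      case False
      then have xa': "fst a < M" using xa by simp
      define xz where "xz = fst z"
      have xz: "xz = u * fst a + v * fst b" using z unfolding xz_def by simp
      define mu where "mu = (xz - fst a) / (M - fst a)"
      have hmu: "mu * (M - fst a) = v * (fst b - fst a)"
      proof -
        have "u = 1 - v" using uv by simp
        then have "xz = (1 - v) * fst a + v * fst b" using xz by simp
        then have "xz - fst a = v * (fst b - fst a)" by (simp add: algebra_simps)
        then show ?thesis unfolding mu_def using xa' by simp
      qed
      have mu0: "0 \<le> mu"
      proof -
        have "0 \<le> mu * (M - fst a)" using hmu uv xa' xb' by simp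
        then show ?thesis using xa' by (simp add: zero_le_mult_iff)
      qed
      have mu1: "mu \<le> 1"
      proof -
        have "xz \<le> M" using zM unfolding xz_def .
        then show ?thesis unfolding mu_def using xa' by simp
      qed
      have vmu: "v \<le> mu"
      proof -
        have "v * (M - fst a) \<le> v * (fst b - fst a)" using uv xb' by (intro mult_left_mono) auto
        then have "v * (M - fst a) \<le> mu * (M - fst a)" using hmu by simp
        then show ?thesis using xa' by simp
      qed
      define Z where "Z = (1 - mu) *\<^sub>R a + mu *\<^sub>R (M, yq)"
      have ZA: "Z \<in> convex hull A" unfolding Z_def
        using a qA mu0 mu1 by (intro convexD_alt[OF convex_convex_hull]) (auto intro: hull_inc)
      have fZ: "fst Z = xz"
      proof -
        have "fst Z = fst a + mu * (M - fst a)" unfolding Z_def by (simp add: algebra_simps)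
        also have "\<dots> = xz"
        proof -
          have "u = 1 - v" using uv by simp
          then have "xz = (1 - v) * fst a + v * fst b" using xz by simp
          then have "xz = fst a + v * (fst b - fst a)" by (simp add: algebra_simps)
          then show ?thesis using hmu by simp
        qed
        finally show ?thesis .
      qed
      define da where "da = snd a - (yq + \<sigma> * (fst a - M))"
      define db where "db = snd b - (yq + \<sigma> * (fst b - M))"
      have da: "da \<ge> 0" using ya unfolding da_def by (simp add: algebra_simps)
      have db: "db \<ge> 0" using yb unfolding db_def by (simp add: algebra_simps)
      have E1: "snd z = (yq + \<sigma> * (xz - M)) + u * da + v * db"
      proof -
        have "u = 1 - v" using uv by simp
        then have "snd z = (1 - v) * snd a + v * snd b" "xz = (1 - v) * fst a + v * fst b" using z xz by simp_all
        then have hz: "snd z = snd a + v * (snd b - snd a)" and hx: "xz = fst a + v * (fst b - fst a)"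
          by (simp_all add: algebra_simps)
        show ?thesis unfolding da_def db_def hz hx \<open>u = 1 - v\<close> by (simp add: algebra_simps)
      qed
      have E2: "snd Z = (yq + \<sigma> * (xz - M)) + (1 - mu) * da"
      proof -
        have hx: "xz = fst a + mu * (M - fst a)" using fZ unfolding Z_def by (simp add: algebra_simps)
        show ?thesis unfolding Z_def da_def hx by (simp add: algebra_simps)
      qed
      have F1: "u * da \<ge> (1 - mu) * da" using vmu uv da by (intro mult_right_mono) auto
      have F2: "v * db \<ge> 0" using uv db by simp
      have "snd Z \<le> snd z" using E1 E2 F1 F2 by linarith
      then have "(fst Z, snd z) \<in> upc A"
        using upc_up[of "fst Z" "snd Z" A "snd z"] ZA hull_sub_upc by auto
      then show ?thesis using fZ unfolding xz_def by (metis prod.collapse)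
    qed
  qed
qed

lemma interp_le:
  fixes j m n yj yn ym sr :: real
  assumes jm: "j < m" and mn: "m < n" and yj: "yj \<le> ym + sr * (j - m)" and yn: "yn = ym + sr * (n - m)"
  shows "(1 - (m - j) / (n - j)) * yj + ((m - j) / (n - j)) * yn \<le> ym"
proof -
  define l where "l = (m - j) / (n - j)"
  have l: "0 \<le> l" "l \<le> 1" using jm mn unfolding l_def by auto
  have e1: "l * (n - j) = m - j" using jm mn unfolding l_def by simp
  have "(1 - l) * yj \<le> (1 - l) * (ym + sr * (j - m))" using l yj by (intro mult_left_mono) auto
  moreover have "(1 - l) * (ym + sr * (j - m)) + l * (ym + sr * (n - m)) = ym + sr * (j + l * (n - j) - m)"
    by (simp add: algebra_simps)
  ultimately have "(1 - l) * yj + l * yn \<le> ym + sr * (j + l * (n - j) - m)" unfolding yn by linarith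
  then show ?thesis using e1 unfolding l_def[symmetric] by simp
qed

lemma rr: assumes "(x::rat) + of_nat n * s \<le> y"
  shows "real_of_rat x + real n * real_of_rat s \<le> real_of_rat y"
proof -
  have "real_of_rat (x + of_nat n * s) \<le> real_of_rat y" using assms by (simp only: of_rat_less_eq)
  then show ?thesis by (simp add: of_rat_add of_rat_mult)
qed

lemma term_est:
  fixes Q :: "'a::field poly"
  assumes L: "padic_valued_field p v pw" and c: "c \<noteq> 0"
    and nz: "coeff Q n * (of_nat (n choose i) * c ^ (n - i)) \<noteq> 0"
  shows "coeff Q n \<noteq> 0 \<and> i \<le> n \<and>
     v (coeff Q n) + of_nat (n - i) * v c \<le> v (coeff Q n * (of_nat (n choose i) * c ^ (n - i)))"
proof -
  have a: "coeff Q n \<noteq> 0" and b: "(of_nat (n choose i) :: 'a) \<noteq> 0" using nz by auto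
  have "i \<le> n" using b by (metis binomial_eq_0 not_le of_nat_0)
  have "v (coeff Q n * (of_nat (n choose i) * c ^ (n - i))) = v (coeff Q n) + (v (of_nat (n choose i) :: 'a) + of_nat (n - i) * v c)"
    using pvf_mult[OF L] pvf_power[OF L c] a b c by simp
  moreover have "v (of_nat (n choose i) :: 'a) \<ge> 0" using pvf_nat[OF L b] .
  ultimately show ?thesis using a \<open>i \<le> n\<close> by auto
qed

theorem lemma2p4:
  fixes p :: nat and v :: "'a::field \<Rightarrow> rat" and pw :: "rat \<Rightarrow> 'a"
    and P :: "'a poly" and u :: 'a
  assumes L: "padic_valued_field p v pw"
    and N: "degree P \<ge> 1"
    and a0: "nc P 0 \<noteq> 0"
    and aN: "nc P (degree P) \<noteq> 0"
    and u: "val_unit v u"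
  shows "(\<forall>x\<in>{0..real (m_max v P)}.
            newton_polygon v (pcompose P [:u * pw (s_max v P), 1:]) x = newton_polygon v P x)
       \<and> (\<forall>k. m_max v P < k \<and> k \<le> degree P \<longrightarrow>
            nc (pcompose P [:u * pw (s_max v P), 1:]) k \<noteq> 0 \<longrightarrow>
            v (nc (pcompose P [:u * pw (s_max v P), 1:]) k)
              \<ge> v (nc P (m_max v P)) + s_max v P * (of_nat k - of_nat (m_max v P)))"
proof -
  define N where "N = degree P"
  define s where "s = s_max v P"
  define M where "M = m_max v P"
  define c where "c = u * pw s"
  define Pu where "Pu = pcompose P [:c, 1:]"
  have uu: "u \<noteq> 0" "v u = 0" using u unfolding val_unit_def by auto
  have pws: "pw s \<noteq> 0" "v (pw s) = s" using pvf_pw[OF L] by auto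
  have c0: "c \<noteq> 0" unfolding c_def using uu pws by simp
  have vc: "v c = s" unfolding c_def using pvf_mult[OF L uu(1) pws(1)] uu pws by simp
  have mc0: "- c \<noteq> 0" using c0 by simp
  have vmc: "v (- c) = s" using pvf_uminus[OF L c0] vc by simp
  have degPu: "degree Pu = N" unfolding Pu_def N_def by (simp add: degree_pcompose)
  have hback: "pcompose Pu [:- c, 1:] = P"
  proof -
    have "pcompose [:c, 1:] [:- c, 1:] = [:0, 1:]" by (simp add: pcompose_pCons)
    then show ?thesis unfolding Pu_def by (metis pcompose_assoc pcompose_idR)
  qed
  define a where "a k = nc P k" for k
  define b where "b k = nc Pu k" for k
  have a': "a k = coeff P (N - k)" for k unfolding a_def nc_def N_def ..
  have b': "b k = coeff Pu (N - k)" for k unfolding b_def nc_def degPu ..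
  define Y where "Y k = real_of_rat (v (a k))" for k
  define Y' where "Y' k = real_of_rat (v (b k))" for k
  define K where "K = {k. k \<le> N \<and> a k \<noteq> 0}"
  define K' where "K' = {k. k \<le> N \<and> b k \<noteq> 0}"
  define pt where "pt k = (real k, Y k)" for k
  define pt' where "pt' k = (real k, Y' k)" for k
  define S where "S = pt ` K"
  define S' where "S' = pt' ` K'"
  have S_eq: "np_points v P = S"
    unfolding np_points_def S_def pt_def K_def Y_def a_def N_def by auto
  have S'_eq: "np_points v Pu = S'"
    unfolding np_points_def S'_def pt'_def K'_def Y'_def b_def degPu by auto
  have finK: "finite K" unfolding K_def by auto
  have finS: "finite S" "finite S'" unfolding S_def S'_def K_def K'_def by auto
  have BP: "np_breakpoint v P k \<longleftrightarrow> k \<in> K \<and> pt k extreme_point_of upc S" for k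
    unfolding np_breakpoint_def S_eq upc_def pt_def Y_def a_def K_def N_def by auto
  have a0': "a 0 \<noteq> 0" "a N \<noteq> 0" using a0 aN unfolding a_def N_def by auto
  have N1: "N \<ge> 1" using N unfolding N_def .
  have inS: "pt k \<in> S" if "k \<le> N" "a k \<noteq> 0" for k using that unfolding S_def K_def by auto
  have inS': "pt' k \<in> S'" if "k \<le> N" "b k \<noteq> 0" for k using that unfolding S'_def K'_def by auto

  have bp0: "np_breakpoint v P 0"
  proof -
    have "pt 0 extreme_point_of upc S"
    proof (rule lex_extreme[where \<alpha>=1 and \<beta>=0 and \<gamma>=0 and \<delta>=1])
      show "pt 0 \<in> S" using inS a0' by auto
      show "\<forall>z\<in>S. 1 * fst (pt 0) + 0 * snd (pt 0) < 1 * fst z + 0 * snd z \<or>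
          (1 * fst z + 0 * snd z = 1 * fst (pt 0) + 0 * snd (pt 0) \<and> 0 * fst (pt 0) + 1 * snd (pt 0) \<le> 0 * fst z + 1 * snd z)"
        unfolding S_def pt_def by auto
    qed auto
    then show ?thesis using BP a0' unfolding K_def by auto
  qed
  define BPs where "BPs = {k. np_breakpoint v P k \<and> k < N}"
  have finBP: "finite BPs" unfolding BPs_def by (rule finite_subset[of _ "{..<N}"]) auto
  have M_eq: "M = Max BPs" unfolding M_def m_max_def BPs_def N_def ..
  have "0 \<in> BPs" unfolding BPs_def using bp0 N1 by auto
  then have "M \<in> BPs" unfolding M_eq using finBP by (intro Max_in) auto
  then have bpM: "np_breakpoint v P M" and MN: "M < N" unfolding BPs_def by auto
  have Mmax: "k \<le> M" if "np_breakpoint v P k" "k < N" for k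
    unfolding M_eq using that finBP by (intro Max_ge) (auto simp: BPs_def)
  have MK: "M \<in> K" and extM: "pt M extreme_point_of upc S" using bpM BP by auto
  have NK: "N \<in> K" unfolding K_def using a0' by auto

  define sr where "sr = real_of_rat s"
  have sN: "v (a N) = v (a M) + s * (of_nat N - of_nat M)"
  proof -
    have "s = (v (a N) - v (a M)) / of_nat (N - M)" unfolding s_def s_max_def a_def N_def M_def ..
    moreover have "(of_nat (N - M) :: rat) = of_nat N - of_nat M" using MN by (simp add: of_nat_diff)
    moreover have "(of_nat N - of_nat M :: rat) \<noteq> 0" using MN by simp
    ultimately show ?thesis by (simp add: field_simps)
  qed
  have YN: "Y N = Y M + sr * (real N - real M)"
    unfolding Y_def sr_def using sN by (simp add: of_rat_add of_rat_mult of_rat_diff)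
  define \<phi> where "\<phi> k = Y k - (Y M + sr * (real k - real M))" for k
  have \<phi>M: "\<phi> M = 0" and \<phi>N: "\<phi> N = 0" using YN unfolding \<phi>_def by auto

  have F1: "\<forall>k\<in>K. \<phi> k \<ge> 0"
  proof (rule ccontr)
    assume "\<not> (\<forall>k\<in>K. \<phi> k \<ge> 0)"
    then obtain j where j: "j \<in> K" "\<phi> j < 0" by auto
    define \<mu> where "\<mu> = Min (\<phi> ` K)"
    have \<mu>le: "\<mu> \<le> \<phi> k" if "k \<in> K" for k using finK that unfolding \<mu>_def by auto
    have \<mu>in: "\<mu> \<in> \<phi> ` K" unfolding \<mu>_def using finK j by (intro Min_in) auto
    define J where "J = {k \<in> K. \<phi> k = \<mu>}"
    have finJ: "finite J" "J \<noteq> {}" using finK \<mu>in unfolding J_def by auto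
    define js where "js = Max J"
    have jsJ: "js \<in> J" unfolding js_def using finJ by (intro Max_in)
    have jsmax: "k \<le> js" if "k \<in> J" for k unfolding js_def using finJ that by auto
    have \<mu>neg: "\<mu> < 0" using \<mu>le[OF j(1)] j(2) by linarith
    have jsK: "js \<in> K" and \<phi>js: "\<phi> js = \<mu>" using jsJ unfolding J_def by auto
    have "js \<noteq> M" using \<phi>js \<phi>M \<mu>neg by auto
    have "js \<noteq> N" using \<phi>js \<phi>N \<mu>neg by auto
    have "js \<le> N" using jsK unfolding K_def by auto
    show False
    proof (cases "M < js")
      case True
      have "pt js extreme_point_of upc S"
      proof (rule lex_extreme[where \<alpha>="- sr" and \<beta>=1 and \<gamma>="-1" and \<delta>=0])
        show "pt js \<in> S" using jsK unfolding S_def by auto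
        show "\<forall>z\<in>S. - sr * fst (pt js) + 1 * snd (pt js) < - sr * fst z + 1 * snd z \<or>
          (- sr * fst z + 1 * snd z = - sr * fst (pt js) + 1 * snd (pt js) \<and> -1 * fst (pt js) + 0 * snd (pt js) \<le> -1 * fst z + 0 * snd z)"
        proof
          fix z assume "z \<in> S"
          then obtain k where k: "k \<in> K" "z = pt k" unfolding S_def by auto
          have d: "(- sr * real k + 1 * Y k) - (- sr * real js + 1 * Y js) = \<phi> k - \<phi> js"
            unfolding \<phi>_def by (simp add: algebra_simps)
          have ge: "\<phi> k \<ge> \<phi> js" using \<mu>le[OF k(1)] \<phi>js by simp
          have eq: "\<phi> k = \<phi> js \<Longrightarrow> k \<le> js" using jsmax[of k] k(1) \<phi>js unfolding J_def by auto
          show "- sr * fst (pt js) + 1 * snd (pt js) < - sr * fst z + 1 * snd z \<or>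
            (- sr * fst z + 1 * snd z = - sr * fst (pt js) + 1 * snd (pt js) \<and> -1 * fst (pt js) + 0 * snd (pt js) \<le> -1 * fst z + 0 * snd z)"
          proof (cases "\<phi> k = \<phi> js")
            case True
            then show ?thesis using d eq unfolding k(2) pt_def by auto
          next
            case False
            then show ?thesis using d ge unfolding k(2) pt_def by auto
          qed
        qed
      qed auto
      then have "np_breakpoint v P js" using BP jsK by auto
      then have "js \<le> M" using Mmax \<open>js \<le> N\<close> \<open>js \<noteq> N\<close> by auto
      then show False using True by simp
    next
      case False
      then have jsM: "js < M" using \<open>js \<noteq> M\<close> by simp
      have "(1 - (real M - real js) / (real N - real js)) * Y js + ((real M - real js) / (real N - real js)) * Y N \<le> Y M"
        by (rule interp_le) (use jsM MN \<phi>js \<mu>neg YN in \<open>auto simp: \<phi>_def\<close>)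
      then have "\<not> ((real M, Y M) extreme_point_of upc S)"
        using not_extreme[where j="real js" and yj="Y js" and T=S and n="real N" and yn="Y N" and m="real M" and ym="Y M"]
          inS[of js] inS[of N] jsK NK jsM MN unfolding pt_def K_def by auto
      then show False using extM unfolding pt_def by simp
    qed
  qed
  have F2: "\<phi> k > 0" if "k \<in> K" "k < M" for k
  proof (rule ccontr)
    assume "\<not> \<phi> k > 0"
    then have "\<phi> k \<le> 0" by simp
    have "(1 - (real M - real k) / (real N - real k)) * Y k + ((real M - real k) / (real N - real k)) * Y N \<le> Y M"
      by (rule interp_le) (use that MN \<open>\<phi> k \<le> 0\<close> YN in \<open>auto simp: \<phi>_def\<close>)
    then have "\<not> ((real M, Y M) extreme_point_of upc S)"
      using not_extreme[where j="real k" and yj="Y k" and T=S and n="real N" and yn="Y N" and m="real M" and ym="Y M"]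
        inS[of k] inS[of N] that NK MN unfolding pt_def K_def by auto
    then show False using extM unfolding pt_def by simp
  qed

  define Lr where "Lr k = v (a M) + s * (of_nat k - of_nat M)" for k
  have Lr_real: "real_of_rat (Lr k) = Y M + sr * (real k - real M)" for k
    unfolding Lr_def Y_def sr_def by (simp add: of_rat_add of_rat_mult of_rat_diff)
  have F1r: "Lr k \<le> v (a k)" if "k \<le> N" "a k \<noteq> 0" for k
  proof -
    have "real_of_rat (Lr k) \<le> Y k" using F1 that unfolding K_def \<phi>_def Lr_real by auto
    then show ?thesis unfolding Y_def by (simp only: of_rat_less_eq)
  qed
  have F2r: "Lr k < v (a k)" if "k < M" "a k \<noteq> 0" for k
  proof -
    have "k \<in> K" using that MN unfolding K_def by auto
    then have "real_of_rat (Lr k) < Y k" using F2 that unfolding \<phi>_def Lr_real by force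
    then show ?thesis unfolding Y_def by (simp only: of_rat_less)
  qed
  have Lr_shift: "Lr j + of_nat (k - j) * s = Lr k" if "j \<le> k" for j k
    using that unfolding Lr_def by (simp add: of_nat_diff algebra_simps)

  have R3: "\<exists>j\<le>k. a j \<noteq> 0 \<and> v (a j) + of_nat (k - j) * s \<le> v (b k)" if "k \<le> N" "b k \<noteq> 0" for k
  proof -
    have "coeff (pcompose P [:c, 1:]) (N - k) \<noteq> 0" using that(2) unfolding b' Pu_def .
    from shift_est[OF L c0 this] obtain n where n: "N - k \<le> n" "n \<le> N" "coeff P n \<noteq> 0"
      "v (coeff P n) + of_nat (n - (N - k)) * v c \<le> v (coeff (pcompose P [:c, 1:]) (N - k))"
      unfolding N_def by auto
    have e1: "N - (N - n) = n" using n by simp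
    have e2: "n - (N - k) = k - (N - n)" using n that by simp
    show ?thesis using n vc unfolding a' b' Pu_def e1 e2
      by (intro exI[of _ "N - n"]) (use that n in auto)
  qed
  have R4: "\<exists>j\<le>k. b j \<noteq> 0 \<and> v (b j) + of_nat (k - j) * s \<le> v (a k)" if "k \<le> N" "a k \<noteq> 0" for k
  proof -
    have "coeff (pcompose Pu [:- c, 1:]) (N - k) \<noteq> 0" using that(2) unfolding a' hback .
    from shift_est[OF L mc0 this] obtain n where n: "N - k \<le> n" "n \<le> N" "coeff Pu n \<noteq> 0"
      "v (coeff Pu n) + of_nat (n - (N - k)) * v (- c) \<le> v (coeff (pcompose Pu [:- c, 1:]) (N - k))"
      unfolding degPu by auto
    have e1: "N - (N - n) = n" using n by simp
    have e2: "n - (N - k) = k - (N - n)" using n that by simp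
    show ?thesis using n vmc unfolding a' b' hback e1 e2
      by (intro exI[of _ "N - n"]) (use that n in auto)
  qed
  have P2: "Lr k \<le> v (b k)" if kk: "k \<le> N" "b k \<noteq> 0" for k
  proof -
    obtain j where j: "j \<le> k" "a j \<noteq> 0" "v (a j) + of_nat (k - j) * s \<le> v (b k)" using R3[OF kk] by auto
    have "Lr j \<le> v (a j)" using F1r[of j] j kk by auto
    then show ?thesis using j Lr_shift[OF j(1)] by linarith
  qed
  have bM: "b M \<noteq> 0 \<and> v (b M) = v (a M)"
  proof -
    define f where "f n = coeff P n * (of_nat (n choose (N - M)) * c ^ (n - (N - M)))" for n
    have bsum: "b M = sum f {..N}" unfolding b' Pu_def f_def coeff_shift N_def ..
    have fM: "f (N - M) = a M" unfolding f_def a' by simp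
    have "sum f {..N} \<noteq> 0 \<and> v (sum f {..N}) = v (f (N - M))"
    proof (rule pvf_dominant[OF L])
      show "f (N - M) \<noteq> 0" using fM MK unfolding K_def by simp
    next
      fix n assume n: "n \<in> {..N}" "n \<noteq> N - M" "f n \<noteq> 0"
      have te: "coeff P n \<noteq> 0 \<and> N - M \<le> n \<and> v (coeff P n) + of_nat (n - (N - M)) * v c \<le> v (f n)"
        using term_est[OF L c0, of P n "N - M"] n(3) unfolding f_def by auto
      define j where "j = N - n"
      have jM: "j < M" using te n unfolding j_def by auto
      have aj: "a j = coeff P n" unfolding a' j_def using n by simp
      have nle: "N - M \<le> n" "n \<le> N" using te n by auto
      have e: "n - (N - M) = M - j" using nle MN unfolding j_def by arith
      have "Lr j < v (a j)" using F2r[OF jM] te aj by auto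
      then have "Lr j + of_nat (M - j) * s < v (f n)" using te aj vc e by auto
      then show "v (f n) > v (f (N - M))" using Lr_shift[of j M] jM fM unfolding Lr_def by simp
    qed auto
    then show ?thesis using bsum fM by simp
  qed
  have b0: "b 0 = a 0"
  proof -
    have "b 0 = lead_coeff Pu" unfolding b' degPu by simp
    also have "\<dots> = lead_coeff P" unfolding Pu_def by (subst lead_coeff_comp) auto
    finally show ?thesis unfolding a' N_def by simp
  qed

  have goal2: "\<forall>k. M < k \<and> k \<le> N \<longrightarrow> b k \<noteq> 0 \<longrightarrow> v (b k) \<ge> v (a M) + s * (of_nat k - of_nat M)"
    using P2 unfolding Lr_def by auto

  have goal1: "\<forall>x\<in>{0..real M}. newton_polygon v Pu x = newton_polygon v P x"
  proof
    fix x assume x: "x \<in> {0..real M}"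
    have NP: "newton_polygon v Q x = Inf (fib (np_points v Q) x)" for Q :: "'a poly"
      unfolding newton_polygon_def fib_def ..
    define SM where "SM = pt ` {k \<in> K. k \<le> M}"
    define SB where "SB = pt ` {k \<in> K. M < k}"
    have SU: "S = SM \<union> SB" unfolding S_def SM_def SB_def image_Un[symmetric]
      by (rule arg_cong[where f="image pt"]) auto
    have finSM: "finite SM" unfolding SM_def using finK by auto
    have p0: "(0, Y 0) \<in> S" "(real M, Y M) \<in> S" using inS[of 0] inS[of M] a0' MK unfolding pt_def K_def by auto
    have p0M: "(0, Y 0) \<in> SM" "(real M, Y M) \<in> SM" using a0' MK unfolding SM_def pt_def K_def by force+
    have p0': "(0, Y' 0) \<in> S'" "(real M, Y' M) \<in> S'" using inS'[of 0] inS'[of M] a0' b0 bM MN unfolding pt'_def by auto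
    have x0: "0 \<le> x" "x \<le> real M" using x by auto
    have S'sub: "S' \<subseteq> upc S"
    proof
      fix z assume "z \<in> S'"
      then obtain k where k: "k \<le> N" "b k \<noteq> 0" "z = pt' k" unfolding S'_def K'_def by auto
      obtain j where j: "j \<le> k" "a j \<noteq> 0" "v (a j) + of_nat (k - j) * s \<le> v (b k)" using R3[OF k(1,2)] by auto
      have jN: "j \<le> N" using j k by simp
      have w: "Y' k \<ge> Y j + (real k - real j) * sr"
        using rr[OF j(3)] j(1) unfolding Y_def Y'_def sr_def by (simp add: of_nat_diff algebra_simps)
      have "\<phi> j \<ge> 0" using F1 j jN unfolding K_def by auto
      then have sl: "Y N - Y j \<le> sr * (real N - real j)" using YN unfolding \<phi>_def by (simp add: algebra_simps)
      have "(real k, Y' k) \<in> upc S"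
        by (rule seg_upc[where j="real j" and wa="Y j" and n="real N" and wb="Y N"])
          (use inS[of j] inS[of N] jN j k a0' sl w in \<open>auto simp: pt_def\<close>)
      then show "z \<in> upc S" unfolding k(3) pt'_def .
    qed
    have SMsub: "SM \<subseteq> upc S'"
    proof
      fix z assume "z \<in> SM"
      then obtain k where k: "k \<le> N" "a k \<noteq> 0" "k \<le> M" "z = pt k" unfolding SM_def K_def by auto
      obtain j where j: "j \<le> k" "b j \<noteq> 0" "v (b j) + of_nat (k - j) * s \<le> v (a k)" using R4[OF k(1,2)] by auto
      have jN: "j \<le> N" using j k by simp
      have w: "Y k \<ge> Y' j + (real k - real j) * sr"
        using rr[OF j(3)] j(1) unfolding Y_def Y'_def sr_def by (simp add: of_nat_diff algebra_simps)
      have "real_of_rat (Lr j) \<le> Y' j" using P2[OF jN j(2)] unfolding Y'_def by (simp only: of_rat_less_eq)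
      moreover have "Y' M = Y M" using bM unfolding Y'_def Y_def by simp
      ultimately have sl: "Y' M - Y' j \<le> sr * (real M - real j)" unfolding Lr_real by (simp add: algebra_simps)
      have "(real k, Y k) \<in> upc S'"
        by (rule seg_upc[where j="real j" and wa="Y' j" and n="real M" and wb="Y' M"])
          (use inS'[of j] p0' jN j k sl w in \<open>auto simp: pt'_def\<close>)
      then show "z \<in> upc S'" unfolding k(4) pt_def .
    qed
    have i1: "Inf (fib S x) \<le> Inf (fib S' x)"
    proof (rule np_mono[OF finS(1)])
      show "fib S' x \<noteq> {}" using fib_ne[OF p0' x0] .
      fix y assume "y \<in> fib S' x"
      then show "(x, y) \<in> upc S" using hull_sub_upc2[OF S'sub] unfolding fib_def by auto
    qed
    have i2: "Inf (fib S' x) \<le> Inf (fib SM x)"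
    proof (rule np_mono[OF finS(2)])
      show "fib SM x \<noteq> {}" using fib_ne[OF p0M x0] .
      fix y assume "y \<in> fib SM x"
      then show "(x, y) \<in> upc S'" using hull_sub_upc2[OF SMsub] unfolding fib_def by auto
    qed
    have i3: "Inf (fib SM x) \<le> Inf (fib S x)"
    proof (rule np_mono[OF finSM])
      show "fib S x \<noteq> {}" using fib_ne[OF p0 x0] .
      fix y assume y: "y \<in> fib S x"
      show "(x, y) \<in> upc SM"
      proof (rule fiber_left[where M="real M" and yq="Y M" and \<sigma>=sr and B=SB])
        show "(real M, Y M) \<in> SM" using p0M by simp
        show "\<forall>z\<in>SM. fst z \<le> real M" unfolding SM_def pt_def by auto
        show "\<forall>z\<in>SB. real M \<le> fst z" unfolding SB_def pt_def by auto
        show "\<forall>z\<in>SM \<union> SB. Y M - sr * real M \<le> - sr * fst z + 1 * snd z"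
        proof
          fix z assume "z \<in> SM \<union> SB"
          then obtain k where k: "k \<in> K" "z = pt k" unfolding SM_def SB_def by auto
          have "\<phi> k \<ge> 0" using F1 k by auto
          then show "Y M - sr * real M \<le> - sr * fst z + 1 * snd z"
            unfolding k(2) pt_def \<phi>_def by (simp add: algebra_simps)
        qed
        show "(x, y) \<in> convex hull (SM \<union> SB)" using y SU unfolding fib_def by simp
        show "fst (x, y) \<le> real M" using x0 by simp
      qed
    qed
    have "Inf (fib S' x) = Inf (fib S x)" using i1 i2 i3 by linarith
    then show "newton_polygon v Pu x = newton_polygon v P x" unfolding NP S_eq S'_eq .
  qed
  show ?thesis using goal1 goal2 unfolding Pu_def c_def s_def M_def N_def b_def a_def by simp
qed

end
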